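(* Let $A$ be a Lagrange tensor along $c$ with base point $t_0$ and fix $v\in E_{t_0}$. (a) The vector field $t\mapsto A_t^{-*}v$ is smooth on the set of regular points. If $t^*$ is a singular point, then $A_t^{-*}v$ has a smooth extension across $t=t^*$ if and only if $v$ is orthogonal to $\ker A_{t^*}$. (b) For $v\neq0$, the function $g_v$ extends continuously to all $t$ (with $g_v(t^* )=0$ at singular points $t^*$ with $v\not\perp\ker A_{t^*}$, where $\|A_t^{-*}v\|\to\infty$), and $g_v(t)>0$ if and only if $v$ is orthogonal to $\ker A_t$.
   Context: Setting: $(M^{n+1},g)$ is a Riemannian manifold and $c:I\to M$ a unit-speed geodesic on an interval $I$. For $t\in I$ let $E_t=\dot c(t)^\perp\subset T_{c(t)}M$ and let $R_t:E_t\to E_t$, $R_t(x)=R(x,\dot c(t))\dot c(t)$. For a vector field $X$ along $c$, $X'$ denotes $\nabla_{\dot c}X$. Fix a base point $t_0\in I$. A Jacobi tensor is a smooth family of linear maps $A_t:E_{t_0}\to E_t$ with $A_t''+R_tA_t=0$. It is a Lagrange tensor if $\ker A_{t_0}\cap\ker A'_{t_0}=0$ and $\langle A_t'v,A_tw\rangle=\langle A_tv,A_t'w\rangle$ for all $t$ and all $v,w\in E_{t_0}$. A point $t$ is regular if $A_t$ is invertible and singular otherwise. $A_t^*:E_t\to E_{t_0}$ is the adjoint of $A_t$ and $A_t^{-*}=(A_t^* )^{-1}$ (at regular $t$). For $0\ne v\in E_{t_0}$, $g_v(t)=\|v\|^2/\|A_t^{-*}v\|$ at regular $t$. *)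

theory Defs
  imports "HOL-Analysis.Analysis"
begin

definition smooth_on :: "real set \<Rightarrow> (real \<Rightarrow> 'a::real_normed_vector) \<Rightarrow> bool" where
  "smooth_on S f \<longleftrightarrow> (\<exists>D :: nat \<Rightarrow> real \<Rightarrow> 'a.
      (\<forall>t\<in>S. D 0 t = f t) \<and>
      (\<forall>k. \<forall>t\<in>S. (D k has_vector_derivative D (Suc k) t) (at t within S)))"

text \<open>Everything is expressed in a parallel orthonormal frame along c,
  identifying E_t with real^'n.  The adjoint becomes the transpose.\<close>
definition inv_adj :: "real^'n^'n \<Rightarrow> real^'n \<Rightarrow> real^'n" where
  "inv_adj M v = matrix_inv (transpose M) *v v"

definition perp_ker :: "real^'n \<Rightarrow> real^'n^'n \<Rightarrow> bool" where
  "perp_ker v M \<longleftrightarrow> (\<forall>x. M *v x = 0 \<longrightarrow> v \<bullet> x = 0)"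

end

theory Submission
  imports Defs
begin

fun Ck :: "nat \<Rightarrow> real set \<Rightarrow> (real \<Rightarrow> 'a::real_normed_vector) \<Rightarrow> bool" where
  "Ck 0 S f = True"
| "Ck (Suc k) S f = (\<exists>f'. (\<forall>t\<in>S. (f has_vector_derivative f' t) (at t)) \<and> Ck k S f')"

lemma Ck_Suc_D: "Ck (Suc k) S f \<Longrightarrow> Ck k S f"
proof (induction k arbitrary: f)
  case 0 then show ?case by simp
next
  case (Suc k)
  then obtain f' where "\<forall>t\<in>S. (f has_vector_derivative f' t) (at t)" "Ck (Suc k) S f'" by auto
  then show ?case using Suc.IH by auto
qed

lemma Ck_le_add: "Ck (m + d) S f \<Longrightarrow> Ck m S f"
proof (induction d)
  case 0 then show ?case by simp
next
  case (Suc d) then show ?case by (metis Ck_Suc_D add_Suc_right)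
qed

lemma Ck_le: "m \<le> k \<Longrightarrow> Ck k S f \<Longrightarrow> Ck m S f"
  using Ck_le_add by (metis le_Suc_ex)

lemma Ck_cong:
  assumes "open S" "Ck k S f" "\<And>t. t \<in> S \<Longrightarrow> f t = g t"
  shows "Ck k S g"
proof (cases k)
  case 0 then show ?thesis by simp
next
  case (Suc m)
  then obtain f' where f': "\<forall>t\<in>S. (f has_vector_derivative f' t) (at t)" "Ck m S f'"
    using assms by auto
  have "\<forall>t\<in>S. (g has_vector_derivative f' t) (at t)"
    using f'(1) assms(1,3) has_vector_derivative_transform_within_open by blast
  then show ?thesis using Suc f'(2) by auto
qed

lemma Ck_subset: "T \<subseteq> S \<Longrightarrow> Ck k S f \<Longrightarrow> Ck k T f"
proof (induction k arbitrary: f)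
  case 0 then show ?case by simp
next
  case (Suc k)
  then obtain f' where "\<forall>t\<in>S. (f has_vector_derivative f' t) (at t)" "Ck k S f'" by auto
  then show ?case using Suc by auto
qed

lemma Ck_const: "Ck k S (\<lambda>t. c)"
proof (induction k)
  case 0 then show ?case by simp
next
  case (Suc k)
  have "Ck k S (\<lambda>t. 0::'a)"
  proof (induction k)
    case 0 then show ?case by simp
  next
    case (Suc k) then show ?case by (auto intro!: exI[of _ "\<lambda>t. 0"])
  qed
  then show ?case by (auto intro!: exI[of _ "\<lambda>t. 0"])
qed

lemma Ck_linear:
  assumes "bounded_linear L"
  shows "Ck k S f \<Longrightarrow> Ck k S (\<lambda>t. L (f t))"
proof (induction k arbitrary: f)
  case 0 then show ?case by simp
next
  case (Suc k)
  then obtain f' where f': "\<forall>t\<in>S. (f has_vector_derivative f' t) (at t)" "Ck k S f'" by auto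
  have "\<forall>t\<in>S. ((\<lambda>t. L (f t)) has_vector_derivative L (f' t)) (at t)"
    using f'(1) bounded_linear.has_vector_derivative[OF assms] by blast
  then show ?case using Suc.IH[OF f'(2)] by auto
qed

lemma Ck_add:
  "Ck k S f \<Longrightarrow> Ck k S g \<Longrightarrow> Ck k S (\<lambda>t. f t + g t)"
proof (induction k arbitrary: f g)
  case 0 then show ?case by simp
next
  case (Suc k)
  obtain f' where f': "\<forall>t\<in>S. (f has_vector_derivative f' t) (at t)" "Ck k S f'" using Suc by auto
  obtain g' where g': "\<forall>t\<in>S. (g has_vector_derivative g' t) (at t)" "Ck k S g'" using Suc by auto
  have "\<forall>t\<in>S. ((\<lambda>t. f t + g t) has_vector_derivative f' t + g' t) (at t)"
    using f'(1) g'(1) has_vector_derivative_add by blast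
  then show ?case using Suc.IH[OF f'(2) g'(2)] by auto
qed

lemma Ck_neg: "Ck k S f \<Longrightarrow> Ck k S (\<lambda>t. - f t)"
  using Ck_linear[OF bounded_linear_minus[OF bounded_linear_ident]] by auto

lemma Ck_diff: "Ck k S f \<Longrightarrow> Ck k S g \<Longrightarrow> Ck k S (\<lambda>t. f t - g t)"
  using Ck_add[of k S f "\<lambda>t. - g t"] Ck_neg[of k S g] by simp

lemma Ck_bilin:
  assumes h: "bounded_bilinear h"
  shows "Ck k S f \<Longrightarrow> Ck k S g \<Longrightarrow> Ck k S (\<lambda>t. h (f t) (g t))"
proof (induction k arbitrary: f g)
  case 0 then show ?case by simp
next
  case (Suc k)
  obtain f' where f': "\<forall>t\<in>S. (f has_vector_derivative f' t) (at t)" "Ck k S f'" using Suc by auto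
  obtain g' where g': "\<forall>t\<in>S. (g has_vector_derivative g' t) (at t)" "Ck k S g'" using Suc by auto
  have "\<forall>t\<in>S. ((\<lambda>t. h (f t) (g t)) has_vector_derivative (h (f t) (g' t) + h (f' t) (g t))) (at t)"
    using f'(1) g'(1) bounded_bilinear.has_vector_derivative[OF h] by blast
  moreover have "Ck k S (\<lambda>t. h (f t) (g' t) + h (f' t) (g t))"
    using Suc.IH[OF Ck_Suc_D[OF Suc.prems(1)] g'(2)] Suc.IH[OF f'(2) Ck_Suc_D[OF Suc.prems(2)]]
    by (rule Ck_add)
  ultimately show ?case by auto
qed

lemma Ck_mult: "Ck k S (f::real\<Rightarrow>real) \<Longrightarrow> Ck k S g \<Longrightarrow> Ck k S (\<lambda>t. f t * g t)"
  by (rule Ck_bilin[OF bounded_bilinear_mult])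

lemma Ck_scaleR: "Ck k S f \<Longrightarrow> Ck k S g \<Longrightarrow> Ck k S (\<lambda>t. f t *\<^sub>R g t)"
  by (rule Ck_bilin[OF bounded_bilinear_scaleR])

lemma Ck_sum: "finite A \<Longrightarrow> (\<And>i. i \<in> A \<Longrightarrow> Ck k S (f i)) \<Longrightarrow> Ck k S (\<lambda>t. \<Sum>i\<in>A. f i t)"
proof (induction A rule: finite_induct)
  case empty then show ?case using Ck_const[of k S 0] by simp
next
  case (insert x F)
  then show ?case using Ck_add[of k S "f x" "\<lambda>t. \<Sum>i\<in>F. f i t"] by simp
qed

lemma Ck_prod: "finite A \<Longrightarrow> (\<And>i. i \<in> A \<Longrightarrow> Ck k S (f i :: real \<Rightarrow> real)) \<Longrightarrow> Ck k S (\<lambda>t. \<Prod>i\<in>A. f i t)"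
proof (induction A rule: finite_induct)
  case empty then show ?case using Ck_const[of k S 1] by simp
next
  case (insert x F)
  then show ?case using Ck_mult[of k S "f x" "\<lambda>t. \<Prod>i\<in>F. f i t"] by simp
qed

lemma Ck_inverse:
  "Ck k S (g::real\<Rightarrow>real) \<Longrightarrow> (\<forall>t\<in>S. g t \<noteq> 0) \<Longrightarrow> Ck k S (\<lambda>t. inverse (g t))"
proof (induction k arbitrary: g)
  case 0 then show ?case by simp
next
  case (Suc k)
  obtain g' where g': "\<forall>t\<in>S. (g has_vector_derivative g' t) (at t)" "Ck k S g'" using Suc by auto
  have "\<forall>t\<in>S. ((\<lambda>t. inverse (g t)) has_vector_derivative - (inverse (g t) * g' t * inverse (g t))) (at t)"
    using g'(1) Suc.prems(2) DERIV_inverse'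
    unfolding has_real_derivative_iff_has_vector_derivative[symmetric] by blast
  moreover have "Ck k S (\<lambda>t. - (inverse (g t) * g' t * inverse (g t)))"
    using Suc.IH[OF Ck_Suc_D[OF Suc.prems(1)] Suc.prems(2)] g'(2)
    by (intro Ck_neg Ck_mult) auto
  ultimately show ?case by auto
qed

lemma Ck_nth: "Ck k S f \<Longrightarrow> Ck k S (\<lambda>t. f t $ i)"
  by (rule Ck_linear[OF bounded_linear_vec_nth])

lemma bounded_linear_axis: "bounded_linear (axis i :: 'a::real_normed_vector \<Rightarrow> 'a^'n)"
proof
  show "axis i (x + y) = axis i x + axis i y" for x y :: 'a
    by (simp add: axis_def vec_eq_iff)
  show "axis i (r *\<^sub>R x) = r *\<^sub>R axis i x" for r x
    by (simp add: axis_def vec_eq_iff)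
  show "\<exists>K. \<forall>x::'a. norm (axis i x :: 'a^'n) \<le> norm x * K"
  proof (rule exI[of _ 1], intro allI)
    fix x :: 'a
    have "(\<Sum>j\<in>UNIV. (norm ((axis i x :: 'a^'n) $ j))\<^sup>2) = (norm x)\<^sup>2"
      by (simp add: axis_def if_distrib[of norm] if_distrib[of "\<lambda>z. z\<^sup>2"] sum.delta cong: if_cong)
    then show "norm (axis i x :: 'a^'n) \<le> norm x * 1"
      by (simp add: norm_vec_def L2_set_def)
  qed
qed

lemma sum_axis: "(\<Sum>i\<in>UNIV. axis i (x $ i)) = (x::'a::real_normed_vector^'n)"
  by (simp add: vec_eq_iff axis_def sum_component if_distrib sum.delta cong: if_cong)

lemma Ck_vec:
  fixes f :: "real \<Rightarrow> 'a::real_normed_vector ^'n"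
  assumes "\<And>i. Ck k S (\<lambda>t. f t $ i)"
  shows "Ck k S f"
proof -
  have "Ck k S (\<lambda>t. \<Sum>i\<in>UNIV. axis i (f t $ i))"
    by (intro Ck_sum Ck_linear[OF bounded_linear_axis] assms) auto
  then show ?thesis by (simp add: sum_axis)
qed

lemma smooth_to_Ck:
  assumes "open S" "smooth_on S f"
  shows "Ck k S f"
proof -
  obtain D where D: "\<forall>t\<in>S. D 0 t = f t" "\<forall>k. \<forall>t\<in>S. (D k has_vector_derivative D (Suc k) t) (at t within S)"
    using assms(2) unfolding smooth_on_def by blast
  have "\<forall>j. Ck k S (D j)"
  proof (induction k)
    case 0 then show ?case by simp
  next
    case (Suc k)
    show ?case
    proof
      fix j
      have "\<forall>t\<in>S. (D j has_vector_derivative D (Suc j) t) (at t)"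
        using D(2) assms(1) at_within_open by metis
      then show "Ck (Suc k) S (D j)" using Suc by auto
    qed
  qed
  then show ?thesis using Ck_cong[OF assms(1), of k "D 0" f] D(1) by auto
qed

definition der :: "real set \<Rightarrow> (real \<Rightarrow> 'a::real_normed_vector) \<Rightarrow> real \<Rightarrow> 'a" where
  "der S g = (SOME g'. \<forall>t\<in>S. (g has_vector_derivative g' t) (at t))"

lemma der_props:
  assumes "open S" "Ck (Suc k) S g"
  shows "\<forall>t\<in>S. (g has_vector_derivative der S g t) (at t)" "Ck k S (der S g)"
proof -
  obtain g' where g': "\<forall>t\<in>S. (g has_vector_derivative g' t) (at t)" "Ck k S g'"
    using assms(2) by auto
  show 1: "\<forall>t\<in>S. (g has_vector_derivative der S g t) (at t)"
    unfolding der_def by (rule someI[of _ g']) (use g' in auto)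
  have "\<And>t. t \<in> S \<Longrightarrow> g' t = der S g t"
    using 1 g'(1) vector_derivative_unique_at by blast
  then show "Ck k S (der S g)" using Ck_cong[OF assms(1) g'(2)] by blast
qed

lemma Ck_to_smooth:
  assumes "open S" "\<And>k. Ck k S f"
  shows "smooth_on S f"
proof -
  define D where "D j = (der S ^^ j) f" for j
  have Dk: "\<forall>m. Ck m S (D j)" for j
  proof (induction j)
    case 0 then show ?case using assms by (simp add: D_def)
  next
    case (Suc j)
    show ?case
    proof
      fix m
      have "Ck (Suc m) S (D j)" using Suc by blast
      then show "Ck m S (D (Suc j))" using der_props(2)[OF assms(1)] by (simp add: D_def)
    qed
  qed
  have "\<forall>k. \<forall>t\<in>S. (D k has_vector_derivative D (Suc k) t) (at t within S)"
  proof (intro allI ballI)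
    fix k t assume t: "t \<in> S"
    have "Ck (Suc 0) S (D k)" using Dk by blast
    then have "(D k has_vector_derivative der S (D k) t) (at t)"
      using der_props(1)[OF assms(1)] t by blast
    then show "(D k has_vector_derivative D (Suc k) t) (at t within S)"
      by (simp add: D_def has_vector_derivative_at_within)
  qed
  then show ?thesis unfolding smooth_on_def by (intro exI[of _ D]) (simp add: D_def)
qed

lemma matrix_inv_right: "invertible M \<Longrightarrow> M ** matrix_inv M = mat 1"
  unfolding invertible_def matrix_inv_def by (rule someI2_ex) auto

lemma matrix_inv_left: "invertible M \<Longrightarrow> matrix_inv M ** M = mat 1"
  unfolding invertible_def matrix_inv_def by (rule someI2_ex) auto

lemma matrix_inv_entry:
  fixes M :: "real^'n^'n"
  assumes "invertible M"
  shows "matrix_inv M $ i $ j = det (\<chi> a b. if b = i then (if a = j then 1 else 0) else M$a$b) / det M"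
proof -
  have d: "det M \<noteq> 0" using assms invertible_det_nz by blast
  have "M *v (matrix_inv M *v axis j 1) = axis j 1"
    using matrix_inv_right[OF assms] by (simp add: matrix_vector_mul_assoc)
  then have "matrix_inv M *v axis j 1 = (\<chi> k. det(\<chi> a b. if b=k then (axis j 1 :: real^'n)$a else M$a$b) / det M)"
    using cramer[OF d] by blast
  then have "(matrix_inv M *v axis j 1) $ i = det(\<chi> a b. if b=i then (axis j 1 :: real^'n)$a else M$a$b) / det M"
    by simp
  moreover have "(matrix_inv M *v axis j 1) $ i = matrix_inv M $ i $ j"
    by (simp add: matrix_vector_mult_def axis_def if_distrib sum.delta cong: if_cong)
  moreover have "(\<chi> a b. if b=i then (axis j 1 :: real^'n)$a else M$a$b) = (\<chi> a b. if b = i then (if a = j then 1 else 0) else M$a$b)"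
    by (simp add: vec_eq_iff axis_def)
  ultimately show ?thesis by simp
qed

lemma Ck_det:
  fixes M :: "real \<Rightarrow> real^'n^'n"
  assumes "\<And>i j. Ck k S (\<lambda>t. M t $ i $ j)"
  shows "Ck k S (\<lambda>t. det (M t))"
  unfolding det_def
  by (intro Ck_sum Ck_mult Ck_prod Ck_const assms) auto

lemma Ck_entry: "Ck k S M \<Longrightarrow> Ck k S (\<lambda>t. M t $ i $ j)"
  by (intro Ck_nth)

lemma Ck_matrix_inv:
  fixes M :: "real \<Rightarrow> real^'n^'n"
  assumes "Ck k S M" "\<forall>t\<in>S. invertible (M t)" "open S"
  shows "Ck k S (\<lambda>t. matrix_inv (M t))"
proof (intro Ck_vec)
  fix i j
  have e: "Ck k S (\<lambda>t. (\<chi> a b. if b = i then (if a = j then 1 else 0) else M t $a$b) $ a' $ b')" for a' b'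
    by (cases "b' = i") (simp_all add: Ck_const Ck_entry assms(1))
  have "Ck k S (\<lambda>t. det (\<chi> a b. if b = i then (if a = j then 1 else 0) else M t $a$b) * inverse (det (M t)))"
    apply (intro Ck_mult Ck_det Ck_inverse e)
    using assms invertible_det_nz by (auto intro: Ck_det Ck_entry)
  then show "Ck k S (\<lambda>t. matrix_inv (M t) $ i $ j)"
    by (rule Ck_cong[OF assms(3)]) (use assms(2) in \<open>simp add: matrix_inv_entry divide_inverse\<close>)
qed

lemma bb_mm: "bounded_bilinear (\<lambda>(A::real^'n^'m) (B::real^'k^'n). A ** B)"
  unfolding bilinear_conv_bounded_bilinear[symmetric] bilinear_def linear_iff
  by (simp add: vec_eq_iff matrix_matrix_mult_def
      sum_distrib_left algebra_simps sum.distrib)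

lemma bb_mv: "bounded_bilinear (\<lambda>(A::real^'n^'m) (x::real^'n). A *v x)"
  unfolding bilinear_conv_bounded_bilinear[symmetric] bilinear_def linear_iff
  by (simp add: vec_eq_iff matrix_vector_mult_def
      sum_distrib_left algebra_simps sum.distrib)

lemma bl_transpose: "bounded_linear (transpose :: real^'n^'m \<Rightarrow> real^'m^'n)"
  unfolding linear_conv_bounded_linear[symmetric] linear_iff
  by (simp add: vec_eq_iff transpose_def)

lemma Ck_mm: "Ck k S (A::real \<Rightarrow> real^'n^'m) \<Longrightarrow> Ck k S (B::real \<Rightarrow> real^'j^'n) \<Longrightarrow> Ck k S (\<lambda>t. A t ** B t)"
  by (rule Ck_bilin[OF bb_mm])

lemma Ck_mv: "Ck k S (A::real \<Rightarrow> real^'n^'m) \<Longrightarrow> Ck k S (x::real \<Rightarrow> real^'n) \<Longrightarrow> Ck k S (\<lambda>t. A t *v x t)"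
  by (rule Ck_bilin[OF bb_mv])

lemma Ck_transpose: "Ck k S (A::real \<Rightarrow> real^'n^'m) \<Longrightarrow> Ck k S (\<lambda>t. transpose (A t))"
  by (rule Ck_linear[OF bl_transpose])

lemma gron_fwd:
  fixes E E' :: "real \<Rightarrow> real"
  assumes ab: "a \<le> b" and d: "\<And>s. s \<in> {a..b} \<Longrightarrow> (E has_real_derivative E' s) (at s)"
    and bd: "\<And>s. s \<in> {a..b} \<Longrightarrow> \<bar>E' s\<bar> \<le> C * E s"
    and nn: "\<And>s. s \<in> {a..b} \<Longrightarrow> 0 \<le> E s" and z: "E a = 0"
  shows "E b = 0"
proof -
  define g where "g s = - E s * exp (- C * (s - a))" for s
  have "g a \<le> g b"
  proof (rule deriv_nonneg_imp_mono[OF _ _ ab])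
    fix s assume s: "s \<in> {a..b}"
    show "(g has_real_derivative (- E' s * exp (- C * (s - a)) + - E s * (exp (- C * (s - a)) * (- C)))) (at s)"
      unfolding g_def using d[OF s] by (auto intro!: derivative_eq_intros)
    have "0 \<le> (C * E s - E' s) * exp (- C * (s - a))"
      using bd[OF s] by (intro mult_nonneg_nonneg) auto
    then show "0 \<le> - E' s * exp (- C * (s - a)) + - E s * (exp (- C * (s - a)) * (- C))"
      by (simp add: algebra_simps)
  qed
  then have "0 \<le> - E b * exp (- C * (b - a))" by (simp add: g_def z)
  then have "E b \<le> 0" by (simp add: zero_le_mult_iff mult_le_0_iff)
  then show ?thesis using nn[of b] ab by auto
qed

lemma gron_bwd:
  fixes E E' :: "real \<Rightarrow> real"
  assumes ab: "a \<le> b" and d: "\<And>s. s \<in> {a..b} \<Longrightarrow> (E has_real_derivative E' s) (at s)"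
    and bd: "\<And>s. s \<in> {a..b} \<Longrightarrow> \<bar>E' s\<bar> \<le> C * E s"
    and nn: "\<And>s. s \<in> {a..b} \<Longrightarrow> 0 \<le> E s" and z: "E b = 0"
  shows "E a = 0"
proof -
  define g where "g s = E s * exp (C * (s - b))" for s
  have "g a \<le> g b"
  proof (rule deriv_nonneg_imp_mono[OF _ _ ab])
    fix s assume s: "s \<in> {a..b}"
    show "(g has_real_derivative (E' s * exp (C * (s - b)) + E s * (exp (C * (s - b)) * C))) (at s)"
      unfolding g_def using d[OF s] by (auto intro!: derivative_eq_intros)
    have "0 \<le> (E' s + C * E s) * exp (C * (s - b))"
      using bd[OF s] by (intro mult_nonneg_nonneg) auto
    then show "0 \<le> E' s * exp (C * (s - b)) + E s * (exp (C * (s - b)) * C)"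
      by (simp add: algebra_simps)
  qed
  then have "E a * exp (C * (a - b)) \<le> 0" by (simp add: g_def z)
  then have "E a \<le> 0" by (simp add: mult_le_0_iff)
  then show ?thesis using nn[of a] ab by auto
qed

lemma mv_neg: "(- M) *v (v::real^'n) = - (M *v v)"
  by (simp add: vec_eq_iff matrix_vector_mult_def sum_negf)

locale lag =
  fixes I :: "real set" and t0 :: real
    and R A A' A'' :: "real \<Rightarrow> real^'n^'n"
  assumes I: "open I" "is_interval I" "t0 \<in> I"
    and R_smooth: "smooth_on I R"
    and R_sym: "\<forall>t\<in>I. transpose (R t) = R t"
    and dA: "\<forall>t\<in>I. (A has_vector_derivative A' t) (at t within I)"
    and dA': "\<forall>t\<in>I. (A' has_vector_derivative A'' t) (at t within I)"
    and jacobi: "\<forall>t\<in>I. A'' t + R t ** A t = 0"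
    and lag_ker: "\<forall>x. A t0 *v x = 0 \<and> A' t0 *v x = 0 \<longrightarrow> x = 0"
    and lag_sym: "\<forall>t\<in>I. \<forall>x y. (A' t *v x) \<bullet> (A t *v y) = (A t *v x) \<bullet> (A' t *v y)"
begin

lemma dA_at: "t \<in> I \<Longrightarrow> (A has_vector_derivative A' t) (at t)"
  using dA I(1) at_within_open by fastforce

lemma dA'_at: "t \<in> I \<Longrightarrow> (A' has_vector_derivative A'' t) (at t)"
  using dA' I(1) at_within_open by fastforce

lemma A''_eq: "t \<in> I \<Longrightarrow> A'' t = - (R t ** A t)"
  using jacobi[rule_format, of t] by (simp add: eq_neg_iff_add_eq_0)

lemma R_Ck: "Ck k I R"
  using smooth_to_Ck[OF I(1) R_smooth] .

lemma A_Ck_both: "Ck k I A \<and> Ck k I A'"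
proof (induction k)
  case 0 then show ?case by simp
next
  case (Suc k)
  have "Ck k I A''"
    by (rule Ck_cong[OF I(1) Ck_neg[OF Ck_mm[OF R_Ck conjunct1[OF Suc]]]]) (simp add: A''_eq)
  then show ?case using Suc dA_at dA'_at by auto
qed

lemma A_Ck: "Ck k I A" using A_Ck_both by blast
lemma A'_Ck: "Ck k I A'" using A_Ck_both by blast

lemma Ck1_cont: "Ck (Suc k) S f \<Longrightarrow> continuous_on S f"
proof -
  assume "Ck (Suc k) S f"
  then obtain f' where "\<forall>t\<in>S. (f has_vector_derivative f' t) (at t)" by auto
  then show ?thesis by (meson continuous_at_imp_continuous_on has_vector_derivative_continuous)
qed

lemma R_cont: "continuous_on I R" by (rule Ck1_cont[OF R_Ck[of "Suc 0"]])
lemma A_cont: "continuous_on I A" by (rule Ck1_cont[OF A_Ck[of "Suc 0"]])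
lemma A'_cont: "continuous_on I A'" by (rule Ck1_cont[OF A'_Ck[of "Suc 0"]])

lemma interval_sub: "a \<in> I \<Longrightarrow> b \<in> I \<Longrightarrow> {a..b} \<subseteq> I"
proof
  fix x assume "a \<in> I" "b \<in> I" "x \<in> {a..b}"
  then show "x \<in> I" using mem_is_interval_1_I[OF I(2), of a b x] by simp
qed

lemma ker_cap:
  assumes t1: "t1 \<in> I" and x: "A t1 *v x = 0" "A' t1 *v x = 0"
  shows "x = 0"
proof -
  define y where "y s = A s *v x" for s
  define z where "z s = A' s *v x" for s
  define E where "E s = y s \<bullet> y s + z s \<bullet> z s" for s
  define E' where "E' s = (y s \<bullet> z s + z s \<bullet> y s) + (z s \<bullet> (A'' s *v x) + (A'' s *v x) \<bullet> z s)" for s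
  obtain K where K: "\<And>M w. norm ((M::real^'n^'n) *v w) \<le> norm M * norm w * K"
    using bounded_bilinear.bounded[OF bb_mv] by blast
  define a where "a = min t1 t0"
  define b where "b = max t1 t0"
  have ab: "a \<le> b" "a \<in> I" "b \<in> I" using t1 I(3) by (auto simp: a_def b_def min_def max_def)
  have J: "{a..b} \<subseteq> I" using interval_sub ab by blast
  have "compact (R ` {a..b})" using compact_continuous_image[OF continuous_on_subset[OF R_cont J]] by simp
  then have "bounded (R ` {a..b})" by (rule compact_imp_bounded)
  then obtain L where "\<forall>y\<in>R ` {a..b}. norm y \<le> L" unfolding bounded_iff by blast
  then have L: "\<And>s. s \<in> {a..b} \<Longrightarrow> norm (R s) \<le> L" by blast
  define C where "C = 1 + \<bar>L * K\<bar>"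
  have dy: "(y has_vector_derivative z s) (at s)" if "s \<in> I" for s
    unfolding y_def z_def using bounded_bilinear.has_vector_derivative[OF bb_mv dA_at[OF that], of "\<lambda>_. x" 0]
    by simp
  have dz: "(z has_vector_derivative (A'' s *v x)) (at s)" if "s \<in> I" for s
    unfolding z_def using bounded_bilinear.has_vector_derivative[OF bb_mv dA'_at[OF that], of "\<lambda>_. x" 0]
    by simp
  have dE: "(E has_real_derivative E' s) (at s)" if "s \<in> I" for s
  proof -
    have "(E has_vector_derivative E' s) (at s)"
      unfolding E_def E'_def
      by (intro has_vector_derivative_add bounded_bilinear.has_vector_derivative[OF bounded_bilinear_inner]
            dy dz that)
    then show ?thesis by (simp add: has_real_derivative_iff_has_vector_derivative)
  qed
  have bd: "\<bar>E' s\<bar> \<le> C * E s" if s: "s \<in> {a..b}" for s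
  proof -
    have sI: "s \<in> I" using J s by auto
    have w: "A'' s *v x = - (R s *v y s)"
      using A''_eq[OF sI] by (simp add: y_def matrix_vector_mul_assoc mv_neg)
    have nw: "norm (A'' s *v x) \<le> \<bar>L * K\<bar> * norm (y s)"
    proof -
      have "norm (A'' s *v x) \<le> norm (R s) * norm (y s) * K" using w K by simp
      also have "\<dots> \<le> \<bar>L * K\<bar> * norm (y s)"
      proof -
        have "norm (R s) * K \<le> \<bar>L * K\<bar>"
        proof -
          have "norm (R s) * K \<le> \<bar>norm (R s) * K\<bar>" by simp
          also have "\<dots> = norm (R s) * \<bar>K\<bar>" by (simp add: abs_mult)
          also have "\<dots> \<le> \<bar>L\<bar> * \<bar>K\<bar>" using L[OF s] by (intro mult_right_mono) auto
          finally show ?thesis by (simp add: abs_mult)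
        qed
        then show ?thesis by (metis mult.commute mult.left_commute mult_right_mono norm_ge_zero)
      qed
      finally show ?thesis .
    qed
    let ?p = "norm (y s)" and ?q = "norm (z s)"
    have e: "E' s = 2 * (y s \<bullet> z s) + 2 * (z s \<bullet> (A'' s *v x))"
      unfolding E'_def using inner_commute[of "z s" "y s"] inner_commute[of "z s" "A'' s *v x"] by simp
    have c1: "\<bar>y s \<bullet> z s\<bar> \<le> ?p * ?q" by (rule Cauchy_Schwarz_ineq2)
    have c2: "\<bar>z s \<bullet> (A'' s *v x)\<bar> \<le> ?q * norm (A'' s *v x)" by (rule Cauchy_Schwarz_ineq2)
    have "\<bar>E' s\<bar> \<le> 2 * (?p * ?q) + 2 * (?q * norm (A'' s *v x))"
      unfolding e using c1 c2 by linarith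
    also have "\<dots> \<le> 2 * (?p * ?q) + 2 * (?q * (\<bar>L * K\<bar> * ?p))"
      using nw by (intro add_left_mono mult_left_mono) auto
    also have "\<dots> = (1 + \<bar>L * K\<bar>) * (2 * ?p * ?q)" by (simp add: algebra_simps)
    also have "\<dots> \<le> (1 + \<bar>L * K\<bar>) * (?p\<^sup>2 + ?q\<^sup>2)"
      by (intro mult_left_mono) (auto simp: sum_squares_bound)
    also have "\<dots> = C * E s" by (simp add: C_def E_def power2_norm_eq_inner)
    finally show ?thesis .
  qed
  have nn: "0 \<le> E s" for s by (simp add: E_def)
  have E1: "E t1 = 0" using x by (simp add: E_def y_def z_def)
  have "E t0 = 0"
  proof (cases "t1 \<le> t0")
    case True
    then have "a = t1" "b = t0" by (auto simp: a_def b_def)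
    then show ?thesis using gron_fwd[of a b E E' C] ab dE J bd nn E1 by blast
  next
    case False
    then have "a = t0" "b = t1" by (auto simp: a_def b_def)
    then show ?thesis using gron_bwd[of a b E E' C] ab dE J bd nn E1 by blast
  qed
  then have "(A t0 *v x) \<bullet> (A t0 *v x) = 0 \<and> (A' t0 *v x) \<bullet> (A' t0 *v x) = 0"
    unfolding E_def y_def z_def using add_nonneg_eq_0_iff inner_ge_zero by blast
  then have "A t0 *v x = 0 \<and> A' t0 *v x = 0" by simp
  then show ?thesis using lag_ker by blast
qed

end

lemma inner_mv_transpose: "((M::real^'n^'m) *v a) \<bullet> b = a \<bullet> (transpose M *v b)"
proof -
  have "((M::real^'n^'m) *v a) \<bullet> b = (\<Sum>i\<in>UNIV. (\<Sum>j\<in>UNIV. M$i$j * a$j) * b$i)"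
    by (simp add: inner_vec_def matrix_vector_mult_def)
  also have "\<dots> = (\<Sum>j\<in>UNIV. a$j * (\<Sum>i\<in>UNIV. M$i$j * b$i))"
    by (simp add: sum_distrib_left sum_distrib_right mult_ac) (rule sum.swap)
  also have "\<dots> = a \<bullet> (transpose M *v b)"
    by (simp add: inner_vec_def matrix_vector_mult_def transpose_def)
  finally show ?thesis .
qed

lemma proj_exists:
  fixes M :: "real^'n^'n"
  obtains P :: "real^'n^'n" where "transpose P = P" "P ** P = P"
    "\<And>x. M *v (P *v x) = 0" "\<And>x. M *v x = 0 \<Longrightarrow> P *v x = x"
proof -
  define K where "K = {x. M *v x = 0}"
  have sK: "subspace K"
    unfolding subspace_def K_def by (simp add: matrix_vector_right_distrib matrix_vector_mult_scaleR)
  obtain B where B: "B \<subseteq> K" "pairwise orthogonal B" "\<And>x. x \<in> B \<Longrightarrow> norm x = 1"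
    "independent B" "span B = K"
    using orthonormal_basis_subspace[OF sK] by blast
  have fB: "finite B" using B(4) independent_imp_finite by blast
  define f where "f x = (\<Sum>b\<in>B. (b \<bullet> x) *\<^sub>R b)" for x
  have lf: "linear f"
    unfolding linear_iff f_def
    by (simp add: inner_add_right scaleR_add_left sum.distrib scaleR_sum_right)
  define P where "P = matrix f"
  have Pv: "P *v x = f x" for x
    using matrix_vector_mul(2)[OF lf] unfolding P_def by metis
  have fK: "f x \<in> K" for x
  proof -
    have "f x \<in> span B" unfolding f_def by (intro span_sum span_scale span_base) auto
    then show ?thesis using B(5) by simp
  qed
  have bb: "b \<bullet> b' = (if b = b' then 1 else 0)" if "b \<in> B" "b' \<in> B" for b b'
  proof (cases "b = b'")
    case True
    then show ?thesis using B(3)[OF that(1)] by (simp add: power2_norm_eq_inner[symmetric])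
  next
    case False
    then show ?thesis using B(2) that unfolding pairwise_def orthogonal_def by auto
  qed
  have fixK: "f y = y" if y: "y \<in> K" for y
  proof -
    define d where "d = y - f y"
    have "orthogonal d b" if b: "b \<in> B" for b
    proof -
      have "f y \<bullet> b = (\<Sum>b'\<in>B. (b' \<bullet> y) * (b' \<bullet> b))"
        unfolding f_def by (simp add: inner_sum_left)
      also have "\<dots> = (\<Sum>b'\<in>B. if b' = b then b \<bullet> y else 0)"
        by (rule sum.cong) (use bb b in auto)
      also have "\<dots> = b \<bullet> y" using fB b by simp
      finally show ?thesis unfolding orthogonal_def d_def by (simp add: inner_diff_left inner_diff_right inner_commute)
    qed
    moreover have "d \<in> span B" unfolding d_def using B(5) y fK sK
      by (simp add: subspace_diff)
    ultimately have "orthogonal d d" using orthogonal_to_span by blast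
    then show ?thesis unfolding orthogonal_self d_def by simp
  qed
  show ?thesis
  proof
    show "transpose P = P"
    proof -
      have e: "P $ i $ j = (\<Sum>b\<in>B. b$j * b$i)" for i j
        unfolding P_def matrix_def f_def by (simp add: sum_component inner_axis)
      show ?thesis by (simp add: vec_eq_iff transpose_def e mult.commute)
    qed
    show "P ** P = P"
      unfolding matrix_eq by (simp add: matrix_vector_mul_assoc[symmetric] Pv fixK fK)
    show "M *v (P *v x) = 0" for x using fK[of x] by (simp add: Pv K_def)
    show "M *v x = 0 \<Longrightarrow> P *v x = x" for x using fixK[of x] by (simp add: Pv K_def)
  qed
qed

lemma seg_in:
  assumes "is_interval I" "ts \<in> I" "t \<in> I" "u \<in> {0..1::real}"
  shows "ts + u * (t - ts) \<in> I"
proof (cases "ts \<le> t")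
  case True
  have "0 \<le> u * (t - ts)" "u * (t - ts) \<le> t - ts"
    using assms(4) True by (auto intro: mult_left_le_one_le)
  then show ?thesis using mem_is_interval_1_I[OF assms(1,2,3)] by simp
next
  case False
  have "u * (t - ts) \<le> 0" "t - ts \<le> u * (t - ts)"
    using assms(4) False by (auto simp: mult_le_0_iff intro: mult_left_le_one_le)
  moreover have "u * (t - ts) \<ge> 1 * (t - ts)"
    using assms(4) False by (intro mult_right_mono_neg) auto
  ultimately show ?thesis using mem_is_interval_1_I[OF assms(1,3,2)] by simp
qed

lemma Ck1_cont': "Ck (Suc k) S f \<Longrightarrow> continuous_on S f"
proof -
  assume "Ck (Suc k) S f"
  then obtain f' where "\<forall>t\<in>S. (f has_vector_derivative f' t) (at t)" by auto
  then show ?thesis by (meson continuous_at_imp_continuous_on has_vector_derivative_continuous)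
qed

lemma Phi_Ck:
  fixes F :: "real \<Rightarrow> 'a::euclidean_space"
  assumes I: "open I" "is_interval I" "ts \<in> I"
  shows "Ck (Suc (Suc k)) I F \<Longrightarrow> Ck k I (\<lambda>t. integral {0..1} (\<lambda>u. (u^j) *\<^sub>R F (ts + u*(t-ts))))"
proof (induction k arbitrary: F j)
  case 0 then show ?case by simp
next
  case (Suc k)
  obtain F' where F': "\<forall>t\<in>I. (F has_vector_derivative F' t) (at t)" "Ck (Suc (Suc k)) I F'"
    using Suc.prems by auto
  have cF: "continuous_on I F" using Ck1_cont'[OF Suc.prems] .
  have cF': "continuous_on I F'" using Ck1_cont'[OF F'(2)] .
  have cvx: "convex I" using I(2) is_interval_convex_1 by blast
  have der: "((\<lambda>t. integral {0..1} (\<lambda>u. (u^j) *\<^sub>R F (ts + u*(t-ts)))) has_vector_derivative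
      integral {0..1} (\<lambda>u. (u^(Suc j)) *\<^sub>R F' (ts + u*(t-ts)))) (at t)" if t: "t \<in> I" for t
  proof -
    have "((\<lambda>t. integral (cbox 0 1) (\<lambda>u. (u^j) *\<^sub>R F (ts + u*(t-ts)))) has_vector_derivative
      integral (cbox 0 1) (\<lambda>u. (u^(Suc j)) *\<^sub>R F' (ts + u*(t-ts)))) (at t within I)"
    proof (rule leibniz_rule_vector_derivative[where f = "\<lambda>t u. (u^j) *\<^sub>R F (ts + u*(t-ts))"])
      fix x and u :: real
      assume x: "x \<in> I" and u: "u \<in> cbox 0 1"
      have p: "ts + u * (x - ts) \<in> I" using seg_in[OF I(2,3) x] u by simp
      have g: "((\<lambda>x. ts + u * (x - ts)) has_vector_derivative u) (at x within I)"
        unfolding has_real_derivative_iff_has_vector_derivative[symmetric]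
        by (auto intro!: derivative_eq_intros)
      have "(F has_vector_derivative F' (ts + u * (x - ts))) (at (ts + u * (x - ts)) within (\<lambda>x. ts + u * (x - ts)) ` I)"
        using F'(1) p has_vector_derivative_at_within by blast
      from vector_diff_chain_within[OF g this]
      have "((\<lambda>x. F (ts + u * (x - ts))) has_vector_derivative u *\<^sub>R F' (ts + u * (x - ts))) (at x within I)"
        by (simp add: o_def)
      from bounded_linear.has_vector_derivative[OF bounded_linear_scaleR_right this, of "u^j"]
      show "((\<lambda>x. (u^j) *\<^sub>R F (ts + u*(x-ts))) has_vector_derivative (u^(Suc j)) *\<^sub>R F' (ts + u*(x-ts))) (at x within I)"
        by (simp add: mult.commute)
    next
      fix x assume x: "x \<in> I"
      have "continuous_on (cbox 0 1) (\<lambda>u. (u^j) *\<^sub>R F (ts + u*(x-ts)))"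
        by (intro continuous_intros continuous_on_compose2[OF cF]) (use seg_in[OF I(2,3) x] in auto)
      then show "(\<lambda>u. (u^j) *\<^sub>R F (ts + u*(x-ts))) integrable_on cbox 0 1"
        by (rule integrable_continuous)
    next
      show "continuous_on (I \<times> cbox 0 1) (\<lambda>(x, u). (u^(Suc j)) *\<^sub>R F' (ts + u*(x-ts)))"
        unfolding case_prod_beta
        by (intro continuous_intros continuous_on_compose2[OF cF']) (use seg_in[OF I(2,3)] in auto)
    qed (use t cvx in auto)
    then show ?thesis using at_within_open[OF t I(1)] by simp
  qed
  show ?case
    apply (simp only: Ck.simps)
    apply (rule exI[of _ "\<lambda>t. integral {0..1} (\<lambda>u. (u^(Suc j)) *\<^sub>R F' (ts + u*(t-ts)))"])
    using der Suc.IH[OF F'(2), of "Suc j"] by blast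
qed

lemma mm_diff_left: "((A::real^'n^'m) - B) ** (C::real^'k^'n) = A ** C - B ** C"
  by (rule bounded_bilinear.diff_left[OF bb_mm])
lemma mm_diff_right: "(A::real^'n^'m) ** ((B::real^'k^'n) - C) = A ** B - A ** C"
  by (rule bounded_bilinear.diff_right[OF bb_mm])
lemma mm_add_left: "((A::real^'n^'m) + B) ** (C::real^'k^'n) = A ** C + B ** C"
  by (rule bounded_bilinear.add_left[OF bb_mm])
lemma mm_scale_left: "(c *\<^sub>R (A::real^'n^'m)) ** (C::real^'k^'n) = c *\<^sub>R (A ** C)"
  by (rule bounded_bilinear.scaleR_left[OF bb_mm])
lemma mm_scale_right: "(A::real^'n^'m) ** (c *\<^sub>R (C::real^'k^'n)) = c *\<^sub>R (A ** C)"
  by (rule bounded_bilinear.scaleR_right[OF bb_mm])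
lemma mm_zero_right: "(A::real^'n^'m) ** (0::real^'k^'n) = 0"
  by (rule bounded_bilinear.zero_right[OF bb_mm])
lemma mm_zero_left: "(0::real^'n^'m) ** (A::real^'k^'n) = 0"
  by (rule bounded_bilinear.zero_left[OF bb_mm])

context lag
begin

definition HH :: "real \<Rightarrow> real \<Rightarrow> real^'n^'n" where
  "HH ts t = integral {0..1} (\<lambda>u. A' (ts + u * (t - ts)))"

lemma HH_Ck: "ts \<in> I \<Longrightarrow> Ck k I (HH ts)"
proof -
  assume ts: "ts \<in> I"
  have "Ck k I (\<lambda>t. integral {0..1} (\<lambda>u. (u^0) *\<^sub>R A' (ts + u*(t-ts))))"
    by (rule Phi_Ck[OF I(1,2) ts A'_Ck])
  then show ?thesis by (simp add: HH_def[abs_def])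
qed

lemma HH_at: "HH ts ts = A' ts"
  by (simp add: HH_def)

lemma HH_eq:
  assumes ts: "ts \<in> I" and t: "t \<in> I"
  shows "A t - A ts = (t - ts) *\<^sub>R HH ts t"
proof (cases "t = ts")
  case True then show ?thesis by simp
next
  case False
  define c where "c = t - ts"
  have c: "c \<noteq> 0" using False by (simp add: c_def)
  have "((\<lambda>u. c *\<^sub>R A' (ts + u * (t - ts))) has_integral (A (ts + 1 * (t - ts)) - A (ts + 0 * (t - ts)))) {0..1}"
  proof (rule fundamental_theorem_of_calculus)
    fix u :: real assume u: "u \<in> {0..1}"
    have p: "ts + u * (t - ts) \<in> I" using seg_in[OF I(2) ts t u] .
    have g: "((\<lambda>u. ts + u * (t - ts)) has_vector_derivative c) (at u)"
      unfolding has_real_derivative_iff_has_vector_derivative[symmetric] c_def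
      by (auto intro!: derivative_eq_intros)
    from vector_diff_chain_at[OF g dA_at[OF p]]
    have "((\<lambda>u. A (ts + u * (t - ts))) has_vector_derivative c *\<^sub>R A' (ts + u * (t - ts))) (at u)"
      by (simp add: o_def)
    then show "((\<lambda>u. A (ts + u * (t - ts))) has_vector_derivative c *\<^sub>R A' (ts + u * (t - ts))) (at u within {0..1})"
      by (rule has_vector_derivative_at_within)
  qed simp
  then have "((\<lambda>u. c *\<^sub>R A' (ts + u * (t - ts))) has_integral c *\<^sub>R ((1/c) *\<^sub>R (A t - A ts))) {0..1}"
    using c by simp
  then have "((\<lambda>u. A' (ts + u * (t - ts))) has_integral ((1/c) *\<^sub>R (A t - A ts))) {0..1}"
    using has_integral_cmul_iff[OF c] by blast
  then have "HH ts t = (1/c) *\<^sub>R (A t - A ts)" unfolding HH_def by (rule integral_unique)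
  then show ?thesis using c by (simp add: c_def)
qed

end

context lag
begin

lemma local_structure:
  assumes ts: "ts \<in> I"
  shows "\<exists>P B e. transpose P = P \<and> P ** P = P \<and> (\<forall>x. A ts *v (P *v x) = 0)
     \<and> (\<forall>x. A ts *v x = 0 \<longrightarrow> P *v x = x) \<and> (\<forall>k. Ck k I B)
     \<and> (\<forall>t\<in>I. A t = B t ** (mat 1 - P + (t - ts) *\<^sub>R P))
     \<and> 0 < e \<and> ball ts e \<subseteq> I \<and> (\<forall>t\<in>ball ts e. invertible (B t))"
proof -
  obtain P where P: "transpose P = P" "P ** P = P" "\<And>x. A ts *v (P *v x) = 0"
    "\<And>x. A ts *v x = 0 \<Longrightarrow> P *v x = x"
    using proj_exists[of "A ts"] by blast
  define Q where "Q = mat 1 - P"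
  define B where "B t = A t ** Q + HH ts t ** P" for t
  have QQ: "Q ** Q = Q" by (simp add: Q_def mm_diff_left mm_diff_right P(2))
  have QP: "Q ** P = 0" by (simp add: Q_def mm_diff_left P(2))
  have PQ: "P ** Q = 0" by (simp add: Q_def mm_diff_right P(2))
  have AP: "A ts ** P = 0"
    unfolding matrix_eq by (simp add: matrix_vector_mul_assoc[symmetric] P(3))
  have BCk: "Ck k I B" for k
    unfolding B_def[abs_def] by (intro Ck_add Ck_mm A_Ck HH_Ck[OF ts] Ck_const)
  have fact: "A t = B t ** (Q + (t - ts) *\<^sub>R P)" if t: "t \<in> I" for t
  proof -
    have "(t - ts) *\<^sub>R (HH ts t ** P) = ((t - ts) *\<^sub>R HH ts t) ** P" by (rule mm_scale_left[symmetric])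
    also have "\<dots> = (A t - A ts) ** P" using HH_eq[OF ts t] by simp
    also have "\<dots> = A t ** P" using AP by (simp add: mm_diff_left)
    finally have h: "(t - ts) *\<^sub>R (HH ts t ** P) = A t ** P" .
    have "B t ** (Q + (t - ts) *\<^sub>R P) = A t ** (Q ** Q) + (t - ts) *\<^sub>R (A t ** (Q ** P))
        + HH ts t ** (P ** Q) + (t - ts) *\<^sub>R (HH ts t ** (P ** P))"
      by (simp add: B_def matrix_add_ldistrib mm_add_left mm_scale_right matrix_mul_assoc scaleR_add_right)
    also have "\<dots> = A t ** Q + A t ** P"
      using h by (simp add: QQ QP PQ P(2) mm_zero_right)
    also have "\<dots> = A t" by (simp add: matrix_add_ldistrib[symmetric] Q_def)
    finally show ?thesis by simp
  qed
  have Bts: "B ts = A ts ** Q + A' ts ** P" by (simp add: B_def HH_at)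
  have inj: "x = 0" if x: "B ts *v x = 0" for x
  proof -
    define a where "a = A ts *v (Q *v x)"
    define c where "c = A' ts *v (P *v x)"
    have ac: "a + c = 0" using x by (simp add: Bts a_def c_def matrix_vector_mult_add_rdistrib matrix_vector_mul_assoc)
    have "c \<bullet> a = (A ts *v (P *v x)) \<bullet> (A' ts *v (Q *v x))"
      unfolding a_def c_def using lag_sym ts by blast
    then have ca: "c \<bullet> a = 0" by (simp add: P(3))
    have "a = - c" using ac by (simp add: eq_neg_iff_add_eq_0)
    then have "c \<bullet> c = 0" using ca by simp
    then have c0: "c = 0" by simp
    then have a0: "a = 0" using ac by simp
    have "P *v (Q *v x) = Q *v x" using P(4)[of "Q *v x"] a0 a_def by simp
    moreover have "P *v (Q *v x) = 0" by (simp add: matrix_vector_mul_assoc PQ)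
    ultimately have qx: "Q *v x = 0" by simp
    have "A ts *v (P *v x) = 0" "A' ts *v (P *v x) = 0" using P(3) c0 c_def by auto
    then have px: "P *v x = 0" using ker_cap[OF ts] by blast
    have "x = Q *v x + P *v x" by (simp add: Q_def matrix_vector_mult_diff_rdistrib)
    then show ?thesis using qx px by simp
  qed
  have "invertible (B ts)"
    unfolding invertible_left_inverse matrix_left_invertible_ker using inj by blast
  then have d0: "det (B ts) \<noteq> 0" using invertible_det_nz by blast
  have "Ck (Suc 0) I (\<lambda>t. det (B t))" by (intro Ck_det Ck_entry BCk)
  then have cd: "continuous_on I (\<lambda>t. det (B t))" by (rule Ck1_cont')
  have "open ((\<lambda>t. det (B t)) -` (- {0}) \<inter> I)"
    using cd I(1) continuous_on_open_vimage by blast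
  moreover have "ts \<in> (\<lambda>t. det (B t)) -` (- {0}) \<inter> I" using d0 ts by simp
  ultimately obtain e where e: "e > 0" "ball ts e \<subseteq> (\<lambda>t. det (B t)) -` (- {0}) \<inter> I"
    using open_contains_ball by blast
  then have "ball ts e \<subseteq> I" "\<forall>t\<in>ball ts e. invertible (B t)"
    using invertible_det_nz by auto
  then show ?thesis
    using P BCk fact e(1) by (intro exI[of _ P] exI[of _ B] exI[of _ e]) (simp add: Q_def)
qed

end

declare transpose_matrix_vector[simp del]

lemma tr_C:
  assumes "transpose P = P"
  shows "transpose (mat 1 - P + c *\<^sub>R (P::real^'n^'n)) = mat 1 - P + c *\<^sub>R P"
proof -
  have h: "P$j$i = P$i$j" for i j using arg_cong[OF assms, of "\<lambda>M. M$i$j"] by (simp add: transpose_def)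
  show ?thesis by (simp add: vec_eq_iff transpose_def mat_def h)
qed

lemma inv_mv: "invertible (M::real^'n^'n) \<Longrightarrow> M *v (matrix_inv M *v v) = v"
  by (simp add: matrix_vector_mul_assoc matrix_inv_right)

lemma inv_mv_unique: "invertible (M::real^'n^'n) \<Longrightarrow> M *v w = v \<Longrightarrow> w = matrix_inv M *v v"
  by (metis matrix_inv_left matrix_vector_mul_assoc matrix_vector_mul_lid)

lemma invertible_perp: "invertible M \<Longrightarrow> perp_ker v (M::real^'n^'n)"
  unfolding perp_ker_def using inj_matrix_vector_mult[of M] by (metis inj_eq matrix_vector_mult_0_right inner_zero_right)

context lag
begin

definition LS :: "real \<Rightarrow> real^'n^'n \<Rightarrow> (real \<Rightarrow> real^'n^'n) \<Rightarrow> real \<Rightarrow> bool" where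
  "LS ts P B e \<longleftrightarrow> transpose P = P \<and> P ** P = P \<and> (\<forall>x. A ts *v (P *v x) = 0)
     \<and> (\<forall>x. A ts *v x = 0 \<longrightarrow> P *v x = x) \<and> (\<forall>k. Ck k I B)
     \<and> (\<forall>t\<in>I. A t = B t ** (mat 1 - P + (t - ts) *\<^sub>R P))
     \<and> 0 < e \<and> ball ts e \<subseteq> I \<and> (\<forall>t\<in>ball ts e. invertible (B t))"

lemma LS_ex: "ts \<in> I \<Longrightarrow> \<exists>P B e. LS ts P B e"
  unfolding LS_def by (rule local_structure)

context
  fixes ts P B e
  assumes ts: "ts \<in> I" and LS: "LS ts P B e"
begin

lemma P_sym: "transpose P = P" using LS by (simp add: LS_def)
lemma P_idem: "P ** P = P" using LS by (simp add: LS_def)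
lemma P_ker: "A ts *v (P *v x) = 0" using LS by (simp add: LS_def)
lemma P_fix: "A ts *v x = 0 \<Longrightarrow> P *v x = x" using LS by (simp add: LS_def)
lemma B_Ck: "Ck k I B" using LS by (simp add: LS_def)
lemma A_fact: "t \<in> I \<Longrightarrow> A t = B t ** (mat 1 - P + (t - ts) *\<^sub>R P)" using LS by (simp add: LS_def)
lemma e_pos: "0 < e" using LS by (simp add: LS_def)
lemma ball_I: "ball ts e \<subseteq> I" using LS by (simp add: LS_def)
lemma B_inv: "t \<in> ball ts e \<Longrightarrow> invertible (B t)" using LS by (simp add: LS_def)

lemma PPv: "P *v (P *v x) = P *v x"
  using P_idem by (metis matrix_vector_mul_assoc)

lemma P_inner: "(P *v a) \<bullet> b = a \<bullet> (P *v b)"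
  using inner_mv_transpose[of P a b] P_sym by simp

lemma Pv_zero_iff: "P *v v = 0 \<longleftrightarrow> perp_ker v (A ts)"
proof
  assume h: "P *v v = 0"
  show "perp_ker v (A ts)" unfolding perp_ker_def
  proof (intro allI impI)
    fix x assume "A ts *v x = 0"
    then have "x = P *v x" using P_fix by simp
    then have "v \<bullet> x = (P *v v) \<bullet> x" using P_inner by metis
    then show "v \<bullet> x = 0" using h by simp
  qed
next
  assume h: "perp_ker v (A ts)"
  have "(P *v v) \<bullet> (P *v v) = v \<bullet> (P *v (P *v v))" using P_inner by blast
  also have "\<dots> = v \<bullet> (P *v v)" by (simp add: PPv)
  also have "\<dots> = 0" using h P_ker unfolding perp_ker_def by blast
  finally show "P *v v = 0" by simp
qed

lemma C_inv:
  assumes "s \<noteq> 0"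
  shows "invertible (mat 1 - P + s *\<^sub>R P)"
proof -
  have "(mat 1 - P + s *\<^sub>R P) ** (mat 1 - P + (1/s) *\<^sub>R P) = mat 1"
    using assms
    by (simp add: matrix_add_ldistrib mm_add_left mm_diff_left mm_diff_right mm_scale_left mm_scale_right P_idem
        algebra_simps)
  then show ?thesis unfolding invertible_right_inverse by blast
qed

lemma A_inv_near: "t \<in> ball ts e \<Longrightarrow> t \<noteq> ts \<Longrightarrow> invertible (A t)"
proof -
  assume t: "t \<in> ball ts e" "t \<noteq> ts"
  have "t \<in> I" using ball_I t by auto
  then show ?thesis using A_fact invertible_mult[OF B_inv[OF t(1)] C_inv] t(2) by simp
qed

lemma trans_A: "t \<in> I \<Longrightarrow> transpose (A t) = (mat 1 - P + (t - ts) *\<^sub>R P) ** transpose (B t)"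
  using A_fact matrix_transpose_mul tr_C[OF P_sym] by metis

lemma key:
  assumes t: "t \<in> I" and w: "transpose (A t) *v w = v"
  shows "(t - ts) *\<^sub>R (P *v (transpose (B t) *v w)) = P *v v"
    and "transpose (B t) *v w - P *v (transpose (B t) *v w) + (t - ts) *\<^sub>R (P *v (transpose (B t) *v w)) = v"
proof -
  define z where "z = transpose (B t) *v w"
  have Cz: "(mat 1 - P + (t - ts) *\<^sub>R P) *v z = v"
    using w trans_A[OF t] by (simp add: z_def matrix_vector_mul_assoc)
  then show e2: "transpose (B t) *v w - P *v (transpose (B t) *v w) + (t - ts) *\<^sub>R (P *v (transpose (B t) *v w)) = v"
    by (simp add: z_def matrix_vector_mult_add_rdistrib matrix_vector_mult_diff_rdistrib scaleR_matrix_vector_assoc[symmetric])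
  have "P *v v = P *v z - P *v (P *v z) + (t - ts) *\<^sub>R (P *v (P *v z))"
    using arg_cong[OF e2[folded z_def], of "\<lambda>y. P *v y"]
    by (simp add: matrix_vector_right_distrib matrix_vector_mult_diff_distrib matrix_vector_mult_scaleR)
  then show "(t - ts) *\<^sub>R (P *v (transpose (B t) *v w)) = P *v v"
    by (simp add: PPv z_def)
qed

lemma Y_formula:
  assumes t: "t \<in> ball ts e" and w: "transpose (A t) *v w = v" and Pv: "P *v v = 0"
    and inj: "t \<noteq> ts \<or> (\<forall>x. A ts *v x = 0 \<longrightarrow> x = 0)"
  shows "w = matrix_inv (transpose (B t)) *v v"
proof -
  have tI: "t \<in> I" using t ball_I by auto
  define z where "z = transpose (B t) *v w"
  have Pz: "P *v z = 0"
  proof (cases "t = ts")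
    case True
    then have "\<forall>x. A ts *v x = 0 \<longrightarrow> x = 0" using inj by simp
    then show ?thesis using P_ker by blast
  next
    case False
    then show ?thesis using key(1)[OF tI w] Pv by (simp add: z_def)
  qed
  have "z = v" using key(2)[OF tI w] Pz by (simp add: z_def)
  then have "transpose (B t) *v w = v" by (simp add: z_def)
  then show ?thesis by (rule inv_mv_unique[OF transpose_invertible[OF B_inv[OF t]]])
qed

end

end

context lag
begin

context
  fixes ts P B e
  assumes ts: "ts \<in> I" and LS: "LS ts P B e"
begin

lemma norm_P_le: "norm (P *v z) \<le> norm z"
proof -
  have o: "(P *v z) \<bullet> (z - P *v z) = 0"
  proof -
    have "(P *v z) \<bullet> (z - P *v z) = z \<bullet> (P *v (z - P *v z))" by (rule P_inner[OF ts LS])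
    also have "P *v (z - P *v z) = 0" using PPv[OF ts LS, of z] by (simp add: matrix_vector_mult_diff_distrib)
    finally show ?thesis by simp
  qed
  have "(norm z)\<^sup>2 = (norm (P *v z + (z - P *v z)))\<^sup>2" by simp
  also have "\<dots> = (norm (P *v z))\<^sup>2 + (norm (z - P *v z))\<^sup>2"
    using o by (intro norm_add_Pythagorean) (simp add: orthogonal_def)
  finally have "(norm (P *v z))\<^sup>2 \<le> (norm z)\<^sup>2" by simp
  then show ?thesis by (rule power2_le_imp_le) simp
qed

lemma nonperp_lim:
  assumes Pv: "P *v v \<noteq> 0"
  shows "((\<lambda>t. inverse (norm (matrix_inv (transpose (A t)) *v v))) \<longlongrightarrow> 0) (at ts)"
    and "eventually (\<lambda>t. 0 < inverse (norm (matrix_inv (transpose (A t)) *v v))) (at ts)"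
proof -
  obtain K where K: "K > 0" "\<And>a b. norm ((a::real^'n^'n) *v b) \<le> norm a * norm b * K"
    using bounded_bilinear.pos_bounded[OF bb_mv] by blast
  have cB: "continuous_on I (\<lambda>t. transpose (B t))"
    using Ck1_cont'[OF Ck_transpose[OF B_Ck[OF ts LS, of "Suc 0"]]] .
  then have "isCont (\<lambda>t. transpose (B t)) ts"
    using continuous_on_eq_continuous_at[OF I(1)] ts by blast
  then have ev1: "eventually (\<lambda>t. dist (transpose (B t)) (transpose (B ts)) < 1) (at ts)"
    unfolding isCont_def by (rule tendstoD) simp
  define M where "M = norm (transpose (B ts)) + 1"
  have Mpos: "M > 0" by (simp add: M_def add_nonneg_pos)
  have ev2: "eventually (\<lambda>t. t \<in> ball ts e \<and> t \<noteq> ts) (at ts)"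
    unfolding eventually_at by (rule exI[of _ e]) (simp add: e_pos[OF ts LS] dist_commute)
  define c where "c = M * K / norm (P *v v)"
  have cpos: "c > 0" using Mpos K(1) Pv by (simp add: c_def)
  have bound: "0 < inverse (norm (matrix_inv (transpose (A t)) *v v))
       \<and> inverse (norm (matrix_inv (transpose (A t)) *v v)) \<le> c * \<bar>t - ts\<bar>"
    if t: "t \<in> ball ts e" "t \<noteq> ts" and d: "dist (transpose (B t)) (transpose (B ts)) < 1" for t
  proof -
    have tI: "t \<in> I" using t ball_I[OF ts LS] by auto
    define w where "w = matrix_inv (transpose (A t)) *v v"
    have w: "transpose (A t) *v w = v"
      unfolding w_def using inv_mv transpose_invertible A_inv_near[OF ts LS t] by blast
    define z where "z = transpose (B t) *v w"
    have "norm (P *v v) = \<bar>t - ts\<bar> * norm (P *v z)"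
      using arg_cong[OF key(1)[OF ts LS tI w], of norm] unfolding z_def by simp
    also have "\<dots> \<le> \<bar>t - ts\<bar> * norm z" using norm_P_le by (simp add: mult_left_mono)
    also have "norm z \<le> norm (transpose (B t)) * norm w * K" using K(2) by (simp add: z_def)
    also have "norm (transpose (B t)) \<le> M"
      using d norm_triangle_ineq2[of "transpose (B t)" "transpose (B ts)"] by (simp add: M_def dist_norm)
    then have "norm (transpose (B t)) * norm w * K \<le> M * norm w * K"
      using K(1) by (intro mult_right_mono) auto
    finally have le: "norm (P *v v) \<le> \<bar>t - ts\<bar> * (M * norm w * K)"
      by (simp add: mult_left_mono)
    have wpos: "norm w > 0"
    proof (rule ccontr)
      assume "\<not> norm w > 0"
      then have "w = 0" by simp
      then show False using w Pv by (simp add: matrix_vector_mult_0_right)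
    qed
    have a: "0 < norm (P *v v)" using Pv by simp
    have "inverse (norm w) = norm (P *v v) / (norm (P *v v) * norm w)" using a wpos by (simp add: field_simps)
    also have "\<dots> \<le> (\<bar>t - ts\<bar> * (M * norm w * K)) / (norm (P *v v) * norm w)"
      by (rule divide_right_mono[OF le]) (use a wpos in simp)
    also have "\<dots> = c * \<bar>t - ts\<bar>" using a wpos by (simp add: c_def field_simps)
    finally have "inverse (norm w) \<le> c * \<bar>t - ts\<bar>" .
    then show ?thesis using wpos by (simp add: w_def)
  qed
  have ev: "eventually (\<lambda>t. 0 < inverse (norm (matrix_inv (transpose (A t)) *v v))
       \<and> inverse (norm (matrix_inv (transpose (A t)) *v v)) \<le> c * \<bar>t - ts\<bar>) (at ts)"
  proof (rule eventually_mono[OF eventually_conj[OF ev1 ev2]])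
    fix t assume h: "dist (transpose (B t)) (transpose (B ts)) < 1 \<and> t \<in> ball ts e \<and> t \<noteq> ts"
    show "0 < inverse (norm (matrix_inv (transpose (A t)) *v v))
       \<and> inverse (norm (matrix_inv (transpose (A t)) *v v)) \<le> c * \<bar>t - ts\<bar>"
      using bound[of t] h by simp
  qed
  then show "eventually (\<lambda>t. 0 < inverse (norm (matrix_inv (transpose (A t)) *v v))) (at ts)"
    by eventually_elim auto
  have "((\<lambda>t. c * \<bar>t - ts\<bar>) \<longlongrightarrow> c * \<bar>ts - ts\<bar>) (at ts)"
    by (intro tendsto_intros)
  then have lim: "((\<lambda>t. c * \<bar>t - ts\<bar>) \<longlongrightarrow> 0) (at ts)" by simp
  have e1: "eventually (\<lambda>t. 0 \<le> inverse (norm (matrix_inv (transpose (A t)) *v v))) (at ts)"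
    using ev by eventually_elim auto
  have e2: "eventually (\<lambda>t. inverse (norm (matrix_inv (transpose (A t)) *v v)) \<le> c * \<bar>t - ts\<bar>) (at ts)"
    using ev by eventually_elim auto
  show "((\<lambda>t. inverse (norm (matrix_inv (transpose (A t)) *v v))) \<longlongrightarrow> 0) (at ts)"
    by (rule tendsto_sandwich[OF e1 e2 tendsto_const lim])
qed

end

end

context lag
begin

lemma det_A_cont: "continuous_on I (\<lambda>t. det (A t))"
  by (rule Ck1_cont'[of 0]) (intro Ck_det Ck_entry A_Ck)

lemma reg_open: "open {t\<in>I. invertible (A t)}"
proof -
  have "open ((\<lambda>t. det (A t)) -` (- {0}) \<inter> I)"
    using det_A_cont I(1) continuous_on_open_vimage by blast
  moreover have "(\<lambda>t. det (A t)) -` (- {0}) \<inter> I = {t\<in>I. invertible (A t)}"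
    using invertible_det_nz by auto
  ultimately show ?thesis by simp
qed

lemma part_a1: "smooth_on {t\<in>I. invertible (A t)} (\<lambda>t. inv_adj (A t) v)"
proof (rule Ck_to_smooth[OF reg_open])
  fix k
  have "Ck k {t\<in>I. invertible (A t)} (\<lambda>t. matrix_inv (transpose (A t)) *v v)"
    by (intro Ck_mv Ck_const Ck_matrix_inv Ck_transpose Ck_subset[OF _ A_Ck] reg_open)
       (auto intro: transpose_invertible)
  then show "Ck k {t\<in>I. invertible (A t)} (\<lambda>t. inv_adj (A t) v)" by (simp add: inv_adj_def)
qed

lemma Y_eq: "invertible (A t) \<Longrightarrow> transpose (A t) *v inv_adj (A t) v = v"
  unfolding inv_adj_def by (rule inv_mv[OF transpose_invertible])

lemma part_a2:
  assumes ts: "ts \<in> I" and sing: "\<not> invertible (A ts)"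
  shows "(\<exists>e>0. \<exists>X :: real \<Rightarrow> real^'n. smooth_on (I \<inter> ball ts e) X \<and>
               (\<forall>t\<in>I \<inter> ball ts e. invertible (A t) \<longrightarrow> X t = inv_adj (A t) v))
           \<longleftrightarrow> perp_ker v (A ts)"
proof -
  obtain P B e where LS: "LS ts P B e" using LS_ex[OF ts] by blast
  show ?thesis
  proof
    assume "\<exists>e>0. \<exists>X :: real \<Rightarrow> real^'n. smooth_on (I \<inter> ball ts e) X \<and>
               (\<forall>t\<in>I \<inter> ball ts e. invertible (A t) \<longrightarrow> X t = inv_adj (A t) v)"
    then obtain e0 and X :: "real \<Rightarrow> real^'n" where e0: "e0 > 0" and sm: "smooth_on (I \<inter> ball ts e0) X"
      and agree: "\<forall>t\<in>I \<inter> ball ts e0. invertible (A t) \<longrightarrow> X t = inv_adj (A t) v" by blast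
    obtain D where D: "\<forall>t\<in>I \<inter> ball ts e0. D 0 t = X t"
      "\<forall>k. \<forall>t\<in>I \<inter> ball ts e0. (D k has_vector_derivative D (Suc k) t) (at t within I \<inter> ball ts e0)"
      using sm unfolding smooth_on_def by blast
    have tsS: "ts \<in> I \<inter> ball ts e0" using ts e0 by simp
    have oS: "open (I \<inter> ball ts e0)" using I(1) by auto
    have "continuous (at ts within I \<inter> ball ts e0) (D 0)"
      using D(2) tsS has_vector_derivative_continuous by blast
    then have cD: "isCont (D 0) ts" using continuous_within_open[OF tsS oS, of "D 0"] by blast
    have cAT: "isCont (\<lambda>t. transpose (A t)) ts"
      using Ck1_cont'[OF Ck_transpose[OF A_Ck[of "Suc 0"]]] continuous_on_eq_continuous_at[OF I(1)] ts
      by blast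
    have lim1: "((\<lambda>t. transpose (A t) *v D 0 t) \<longlongrightarrow> transpose (A ts) *v D 0 ts) (at ts)"
      using bounded_bilinear.tendsto[OF bb_mv cAT[unfolded isCont_def] cD[unfolded isCont_def]] by simp
    have "eventually (\<lambda>t. transpose (A t) *v D 0 t = v) (at ts)"
      unfolding eventually_at
    proof (rule exI[of _ "min e e0"], intro conjI ballI impI)
      show "min e e0 > 0" using e0 e_pos[OF ts LS] by simp
      fix t assume t: "t \<noteq> ts \<and> dist t ts < min e e0"
      then have tb: "t \<in> ball ts e" "t \<in> ball ts e0" by (auto simp: dist_commute)
      then have tI: "t \<in> I" using ball_I[OF ts LS] by auto
      have inv: "invertible (A t)" using A_inv_near[OF ts LS tb(1)] t by simp
      have "D 0 t = inv_adj (A t) v" using D(1) agree tI tb(2) inv by auto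
      then show "transpose (A t) *v D 0 t = v" using Y_eq[OF inv] by simp
    qed
    then have lim2: "((\<lambda>t. transpose (A t) *v D 0 t) \<longlongrightarrow> v) (at ts)" by (rule tendsto_eventually)
    have eq: "transpose (A ts) *v D 0 ts = v"
      using tendsto_unique[OF at_neq_bot lim1 lim2] .
    show "perp_ker v (A ts)" unfolding perp_ker_def
    proof (intro allI impI)
      fix x assume x: "A ts *v x = 0"
      have "v \<bullet> x = (transpose (A ts) *v D 0 ts) \<bullet> x" using eq by simp
      also have "\<dots> = D 0 ts \<bullet> (A ts *v x)" using inner_mv_transpose[of "transpose (A ts)" "D 0 ts" x] by simp
      finally show "v \<bullet> x = 0" using x by simp
    qed
  next
    assume perp: "perp_ker v (A ts)"
    then have Pv: "P *v v = 0" using Pv_zero_iff[OF ts LS] by blast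
    have eq: "I \<inter> ball ts e = ball ts e" using ball_I[OF ts LS] by auto
    define X where "X t = matrix_inv (transpose (B t)) *v v" for t
    have sm: "smooth_on (ball ts e) X"
    proof (rule Ck_to_smooth[OF open_ball])
      fix k
      show "Ck k (ball ts e) X"
        unfolding X_def[abs_def]
        by (intro Ck_mv Ck_const Ck_matrix_inv Ck_transpose Ck_subset[OF ball_I[OF ts LS] B_Ck[OF ts LS]] open_ball)
           (auto intro: transpose_invertible B_inv[OF ts LS])
    qed
    have "\<forall>t\<in>I \<inter> ball ts e. invertible (A t) \<longrightarrow> X t = inv_adj (A t) v"
    proof (intro ballI impI)
      fix t assume t: "t \<in> I \<inter> ball ts e" and inv: "invertible (A t)"
      have "t \<noteq> ts" using inv sing by auto
      then show "X t = inv_adj (A t) v"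
        using Y_formula[OF ts LS _ Y_eq[OF inv] Pv] t by (simp add: X_def)
    qed
    then show "\<exists>e>0. \<exists>X :: real \<Rightarrow> real^'n. smooth_on (I \<inter> ball ts e) X \<and>
               (\<forall>t\<in>I \<inter> ball ts e. invertible (A t) \<longrightarrow> X t = inv_adj (A t) v)"
      using sm e_pos[OF ts LS] eq by metis
  qed
qed

end

context lag
begin

lemma Y_nz: "invertible (A t) \<Longrightarrow> v \<noteq> 0 \<Longrightarrow> inv_adj (A t) v \<noteq> 0"
proof
  assume inv: "invertible (A t)" and v: "v \<noteq> 0" and z: "inv_adj (A t) v = 0"
  have "v = transpose (A t) *v inv_adj (A t) v" using Y_eq[OF inv] by simp
  also have "\<dots> = 0" using z by simp
  finally show False using v by simp
qed

lemma inv_nz: "invertible (M::real^'n^'n) \<Longrightarrow> v \<noteq> 0 \<Longrightarrow> matrix_inv M *v v \<noteq> 0"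
proof
  assume inv: "invertible M" and v: "v \<noteq> 0" and z: "matrix_inv M *v v = 0"
  have "v = M *v (matrix_inv M *v v)" using inv_mv[OF inv] by simp
  also have "\<dots> = 0" using z by simp
  finally show False using v by simp
qed

lemma inv_ker: "invertible (M::real^'n^'n) \<Longrightarrow> M *v x = 0 \<Longrightarrow> x = 0"
  using matrix_left_invertible_ker invertible_left_inverse by blast

lemma part_b:
  assumes v: "v \<noteq> 0"
  shows "\<exists>G :: real \<Rightarrow> real. continuous_on I G
             \<and> (\<forall>t\<in>I. invertible (A t) \<longrightarrow> G t = (norm v)\<^sup>2 / norm (inv_adj (A t) v))
             \<and> (\<forall>ts\<in>I. \<not> invertible (A ts) \<and> \<not> perp_ker v (A ts) \<longrightarrow>
                  G ts = 0 \<and>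
                  filterlim (\<lambda>t. norm (inv_adj (A t) v)) at_top
                    (at ts within {t\<in>I. invertible (A t)}))
             \<and> (\<forall>t\<in>I. G t > 0 \<longleftrightarrow> perp_ker v (A t))"
proof -
  have "\<forall>ts\<in>I. \<exists>x. LS ts (fst x) (fst (snd x)) (snd (snd x))"
  proof
    fix ts assume tsI: "ts \<in> I"
    obtain P B e where "LS ts P B e" using LS_ex[OF tsI] by blast
    then show "\<exists>x. LS ts (fst x) (fst (snd x)) (snd (snd x))" by (intro exI[of _ "(P, B, e)"]) (simp only: fst_conv snd_conv)
  qed
  then have "\<exists>f. \<forall>ts\<in>I. LS ts (fst (f ts)) (fst (snd (f ts))) (snd (snd (f ts)))"
    by (rule bchoice)
  then obtain f where f: "\<forall>ts\<in>I. LS ts (fst (f ts)) (fst (snd (f ts))) (snd (snd (f ts)))"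
    by (rule exE)
  define PP where "PP ts = fst (f ts)" for ts
  define BB where "BB ts = fst (snd (f ts))" for ts
  define EE where "EE ts = snd (snd (f ts))" for ts
  have LSf: "LS ts (PP ts) (BB ts) (EE ts)" if "ts \<in> I" for ts
    using f that by (simp add: PP_def BB_def EE_def)
  define Y where "Y t = inv_adj (A t) v" for t
  define G where "G t = (if invertible (A t) then (norm v)\<^sup>2 / norm (Y t)
      else if perp_ker v (A t) then (norm v)\<^sup>2 / norm (matrix_inv (transpose (BB t t)) *v v) else 0)" for t
  have Bnz: "matrix_inv (transpose (BB t t)) *v v \<noteq> 0" if t: "t \<in> I" for t
  proof -
    have "invertible (BB t t)" using B_inv[OF t LSf[OF t]] e_pos[OF t LSf[OF t]] by simp
    then show ?thesis using inv_nz[OF transpose_invertible v] by blast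
  qed
  have nv: "norm v > 0" using v by simp
  have pos: "\<forall>t\<in>I. G t > 0 \<longleftrightarrow> perp_ker v (A t)"
  proof
    fix t assume t: "t \<in> I"
    show "G t > 0 \<longleftrightarrow> perp_ker v (A t)"
    proof (cases "invertible (A t)")
      case True
      then show ?thesis using invertible_perp[OF True] Y_nz[OF True v] nv by (simp add: G_def Y_def)
    next
      case False
      then show ?thesis using Bnz[OF t] nv by (simp add: G_def)
    qed
  qed
  have cont: "isCont G ts" if ts: "ts \<in> I" for ts
  proof -
    let ?P = "PP ts" and ?B = "BB ts" and ?e = "EE ts"
    have LS: "LS ts ?P ?B ?e" using LSf[OF ts] .
    show ?thesis
    proof (cases "perp_ker v (A ts)")
      case True
      then have Pv: "?P *v v = 0" using Pv_zero_iff[OF ts LS] by blast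
      define Z where "Z t = (norm v)\<^sup>2 / norm (matrix_inv (transpose (?B t)) *v v)" for t
      have ckM: "Ck (Suc 0) (ball ts ?e) (\<lambda>t. matrix_inv (transpose (?B t)) *v v)"
        by (intro Ck_mv Ck_const Ck_matrix_inv Ck_transpose Ck_subset[OF ball_I[OF ts LS] B_Ck[OF ts LS]] open_ball)
           (auto intro: transpose_invertible B_inv[OF ts LS])
      have nzM: "matrix_inv (transpose (?B t)) *v v \<noteq> 0" if "t \<in> ball ts ?e" for t
        using inv_nz[OF transpose_invertible[OF B_inv[OF ts LS that]] v] .
      have cZ: "continuous_on (ball ts ?e) Z"
        unfolding Z_def
        by (rule continuous_on_divide[OF continuous_on_const continuous_on_norm[OF Ck1_cont'[OF ckM]]])
           (use nzM in simp)
      have GZ: "G t = Z t" if t: "t \<in> ball ts ?e" for t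
      proof (cases "invertible (A t)")
        case True
        have inj: "t \<noteq> ts \<or> (\<forall>x. A ts *v x = 0 \<longrightarrow> x = 0)"
          using True inv_ker[of "A ts"] by blast
        have "Y t = matrix_inv (transpose (?B t)) *v v"
          using Y_formula[OF ts LS t Y_eq[OF True] Pv inj] by (simp add: Y_def)
        then show ?thesis using True by (simp add: G_def Z_def)
      next
        case False
        then have "t = ts" using A_inv_near[OF ts LS t] by auto
        then show ?thesis using False True by (simp add: G_def Z_def)
      qed
      have "continuous_on (ball ts ?e) G" by (rule continuous_on_eq[OF cZ]) (simp add: GZ)
      moreover have "ts \<in> ball ts ?e" using e_pos[OF ts LS] by simp
      ultimately show ?thesis
        using continuous_on_eq_continuous_at[OF open_ball, of ts ?e G] by blast
    next
      case False
      have sing: "\<not> invertible (A ts)" using False invertible_perp[of "A ts" v] by blast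
      have Pv: "?P *v v \<noteq> 0" using Pv_zero_iff[OF ts LS] False by blast
      have lim: "((\<lambda>t. inverse (norm (Y t))) \<longlongrightarrow> 0) (at ts)"
        using nonperp_lim(1)[OF ts LS Pv] by (simp add: Y_def inv_adj_def)
      have ev: "eventually (\<lambda>t. (norm v)\<^sup>2 * inverse (norm (Y t)) = G t) (at ts)"
        unfolding eventually_at
      proof (rule exI[of _ ?e], intro conjI ballI impI)
        show "?e > 0" using e_pos[OF ts LS] .
        fix t assume t: "t \<noteq> ts \<and> dist t ts < ?e"
        then have "invertible (A t)" using A_inv_near[OF ts LS] by (auto simp: dist_commute)
        then show "(norm v)\<^sup>2 * inverse (norm (Y t)) = G t" by (simp add: G_def divide_inverse)
      qed
      have "((\<lambda>t. (norm v)\<^sup>2 * inverse (norm (Y t))) \<longlongrightarrow> (norm v)\<^sup>2 * 0) (at ts)"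
        by (intro tendsto_intros lim)
      then have "(G \<longlongrightarrow> 0) (at ts)" using tendsto_cong[OF ev] by simp
      moreover have "G ts = 0" using sing False by (simp add: G_def)
      ultimately show ?thesis unfolding isCont_def by simp
    qed
  qed
  have lims: "G ts = 0 \<and> filterlim (\<lambda>t. norm (inv_adj (A t) v)) at_top (at ts within {t\<in>I. invertible (A t)})"
    if ts: "ts \<in> I" and h: "\<not> invertible (A ts) \<and> \<not> perp_ker v (A ts)" for ts
  proof
    show "G ts = 0" using h by (simp add: G_def)
    have LS: "LS ts (PP ts) (BB ts) (EE ts)" using LSf[OF ts] .
    have Pv: "PP ts *v v \<noteq> 0" using Pv_zero_iff[OF ts LS] h by blast
    have "filterlim (\<lambda>t. inverse (inverse (norm (matrix_inv (transpose (A t)) *v v)))) at_top (at ts)"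
      by (rule filterlim_inverse_at_top[OF nonperp_lim(1)[OF ts LS Pv] nonperp_lim(2)[OF ts LS Pv]])
    then have "filterlim (\<lambda>t. norm (inv_adj (A t) v)) at_top (at ts)"
      by (simp add: inv_adj_def)
    then show "filterlim (\<lambda>t. norm (inv_adj (A t) v)) at_top (at ts within {t\<in>I. invertible (A t)})"
      by (rule filterlim_mono[OF _ order_refl]) (simp add: at_le)
  qed
  have "continuous_on I G" using cont continuous_on_eq_continuous_at[OF I(1)] by blast
  moreover have "\<forall>t\<in>I. invertible (A t) \<longrightarrow> G t = (norm v)\<^sup>2 / norm (inv_adj (A t) v)"
    by (simp add: G_def Y_def)
  ultimately show ?thesis using lims pos by (intro exI[of _ G] conjI) auto
qed

end

theorem proposition1p3:
  fixes I :: "real set" and t0 :: real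
    and R A A' A'' :: "real \<Rightarrow> real^'n^'n" and v :: "real^'n"
  assumes I: "open I" "is_interval I" "t0 \<in> I"
    and R_smooth: "smooth_on I R"
    and R_sym: "\<forall>t\<in>I. transpose (R t) = R t"
    and dA: "\<forall>t\<in>I. (A has_vector_derivative A' t) (at t within I)"
    and dA': "\<forall>t\<in>I. (A' has_vector_derivative A'' t) (at t within I)"
    and jacobi: "\<forall>t\<in>I. A'' t + R t ** A t = 0"
    and lag_ker: "\<forall>x. A t0 *v x = 0 \<and> A' t0 *v x = 0 \<longrightarrow> x = 0"
    and lag_sym: "\<forall>t\<in>I. \<forall>x y. (A' t *v x) \<bullet> (A t *v y) = (A t *v x) \<bullet> (A' t *v y)"
  shows
    "smooth_on {t\<in>I. invertible (A t)} (\<lambda>t. inv_adj (A t) v)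
     \<and> (\<forall>ts\<in>I. \<not> invertible (A ts) \<longrightarrow>
          ((\<exists>e>0. \<exists>X :: real \<Rightarrow> real^'n. smooth_on (I \<inter> ball ts e) X \<and>
               (\<forall>t\<in>I \<inter> ball ts e. invertible (A t) \<longrightarrow> X t = inv_adj (A t) v))
           \<longleftrightarrow> perp_ker v (A ts)))
     \<and> (v \<noteq> 0 \<longrightarrow>
          (\<exists>G :: real \<Rightarrow> real. continuous_on I G
             \<and> (\<forall>t\<in>I. invertible (A t) \<longrightarrow> G t = (norm v)\<^sup>2 / norm (inv_adj (A t) v))
             \<and> (\<forall>ts\<in>I. \<not> invertible (A ts) \<and> \<not> perp_ker v (A ts) \<longrightarrow>
                  G ts = 0 \<and>
                  filterlim (\<lambda>t. norm (inv_adj (A t) v)) at_top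
                    (at ts within {t\<in>I. invertible (A t)}))
             \<and> (\<forall>t\<in>I. G t > 0 \<longleftrightarrow> perp_ker v (A t))))"
  proof -
  interpret lag I t0 R A A' A''
    by unfold_locales (fact assms)+
  show ?thesis
    using part_a1[of v] part_a2[of _ v] part_b[of v] by blast
qed

end
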